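(* Let $\mathbf G$ be a finite group and let $p_1,\dots,p_n$ ($n\ge 2$) be all the distinct prime divisors of $\lvert G\rvert$. Let $\Gamma=\mathcal G_e(\mathbf G)$ and $\Gamma_{p_i}=\Gamma[G_{p_i}]$. Suppose that for each $i>2$, $\mathbf G$ has a unique Sylow $p_i$-subgroup and it is cyclic. Then the strong product $\Gamma_{p_1}\boxtimes\Gamma_{p_2}\boxtimes\cdots\boxtimes\Gamma_{p_n}$ is a Berge graph.
   Context: The enhanced power graph $\mathcal G_e(\mathbf G)$ has vertex set $G$, distinct $x,y$ adjacent iff $\langle x,y\rangle$ is cyclic. For a prime $p$, $G_p$ is the set of elements of $\mathbf G$ whose order is a power of $p$ (including the identity); $\Gamma[X]$ is the induced subgraph on $X$. The strong product $\boxtimes_{i=1}^n\Gamma_i$ has vertex set $\prod_i V(\Gamma_i)$, and distinct tuples $\bar x,\bar y$ are adjacent iff for every $i$, $\bar x(i)=\bar y(i)$ or $\bar x(i)\sim_{\Gamma_i}\bar y(i)$. A graph is Berge if neither it nor its complement contains an induced cycle of odd length at least $5$. *)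

theory Defs
  imports "HOL-Algebra.Algebra" "HOL-Library.FuncSet"
begin

text \<open>Graphs are given by a vertex set V and an adjacency relation E (only used on V).\<close>

definition enh_adj :: "('a, 'b) monoid_scheme \<Rightarrow> 'a \<Rightarrow> 'a \<Rightarrow> bool" where
  "enh_adj G x y \<longleftrightarrow> x \<noteq> y \<and> cyclic_group (subgroup_generated G {x, y})"

definition p_elements :: "('a, 'b) monoid_scheme \<Rightarrow> nat \<Rightarrow> 'a set" where
  "p_elements G p = {x \<in> carrier G. \<exists>k::nat. group.ord G x = p ^ k}"

definition strong_prod_vert :: "nat \<Rightarrow> (nat \<Rightarrow> 'a set) \<Rightarrow> (nat \<Rightarrow> 'a) set" where
  "strong_prod_vert n V = PiE {..<n} V"

definition strong_prod_adj :: "nat \<Rightarrow> (nat \<Rightarrow> 'a \<Rightarrow> 'a \<Rightarrow> bool) \<Rightarrow> (nat \<Rightarrow> 'a) \<Rightarrow> (nat \<Rightarrow> 'a) \<Rightarrow> bool" where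
  "strong_prod_adj n E f g \<longleftrightarrow> f \<noteq> g \<and> (\<forall>i<n. f i = g i \<or> E i (f i) (g i))"

definition compl_adj :: "('a \<Rightarrow> 'a \<Rightarrow> bool) \<Rightarrow> 'a \<Rightarrow> 'a \<Rightarrow> bool" where
  "compl_adj E x y \<longleftrightarrow> x \<noteq> y \<and> \<not> E x y"

definition has_induced_cycle :: "'a set \<Rightarrow> ('a \<Rightarrow> 'a \<Rightarrow> bool) \<Rightarrow> nat \<Rightarrow> bool" where
  "has_induced_cycle V E k \<longleftrightarrow> (\<exists>c :: nat \<Rightarrow> 'a. inj_on c {..<k} \<and> c ` {..<k} \<subseteq> V \<and>
     (\<forall>i<k. \<forall>j<k. E (c i) (c j) \<longleftrightarrow> (j = (i + 1) mod k \<or> i = (j + 1) mod k)))"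

definition berge :: "'a set \<Rightarrow> ('a \<Rightarrow> 'a \<Rightarrow> bool) \<Rightarrow> bool" where
  "berge V E \<longleftrightarrow> (\<forall>k. odd k \<and> k \<ge> 5 \<longrightarrow>
      \<not> has_induced_cycle V E k \<and> \<not> has_induced_cycle V (compl_adj E) k)"

definition sylow_subgroups :: "('a, 'b) monoid_scheme \<Rightarrow> nat \<Rightarrow> 'a set set" where
  "sylow_subgroups G p = {P. subgroup P G \<and> card P = p ^ multiplicity p (order G)}"

end

theory Submission
  imports Defs "HOL-Computational_Algebra.Primes"
begin


lemma sp_adj_R:
  assumes "strong_prod_adj n E f g" "t < n"
  shows "f t = g t \<or> E t (f t) (g t)"
  using assms unfolding strong_prod_adj_def by blast

lemma sp_nonadj:
  assumes "\<not> strong_prod_adj n E f g" "f \<noteq> g"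
    and total: "\<And>t. 2 \<le> t \<Longrightarrow> t < n \<Longrightarrow> f t = g t \<or> E t (f t) (g t)"
  shows "\<not> (f 0 = g 0 \<or> E 0 (f 0) (g 0)) \<or> \<not> (f 1 = g 1 \<or> E 1 (f 1) (g 1))"
proof (rule ccontr)
  assume "\<not> ?thesis"
  then have "\<forall>t<n. f t = g t \<or> E t (f t) (g t)"
    using total by (metis One_nat_def less_2_cases not_less)
  then show False using assms(1,2) unfolding strong_prod_adj_def by blast
qed

lemma succ_mod: "i < k \<Longrightarrow> (i + 1) mod k = (if i + 1 = k then 0 else i + 1)"
  for i k :: nat
proof (cases "i + 1 = k")
  case False
  assume a: "i < k"
  then have "i + 1 < k" using False by linarith
  then show ?thesis using False by simp
qed simp

lemma berge_abstract:
  fixes V :: "nat \<Rightarrow> 'a set" and E :: "nat \<Rightarrow> 'a \<Rightarrow> 'a \<Rightarrow> bool"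
  assumes Q: "\<And>t a b c d. t < n \<Longrightarrow> a \<in> V t \<Longrightarrow> b \<in> V t \<Longrightarrow> c \<in> V t \<Longrightarrow> d \<in> V t \<Longrightarrow>
      (a = b \<or> E t a b) \<Longrightarrow> (b = c \<or> E t b c) \<Longrightarrow> (c = d \<or> E t c d) \<Longrightarrow>
      (a = c \<or> E t a c) \<or> (b = d \<or> E t b d)"
    and total: "\<And>t a b. 2 \<le> t \<Longrightarrow> t < n \<Longrightarrow> a \<in> V t \<Longrightarrow> b \<in> V t \<Longrightarrow> a = b \<or> E t a b"
    and n2: "n \<ge> 2"
  shows "berge (strong_prod_vert n V) (strong_prod_adj n E)"
proof -
  let ?V = "strong_prod_vert n V" and ?E = "strong_prod_adj n E"
  define R where "R t x y \<longleftrightarrow> x = y \<or> E t x y" for t x y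
  have memV: "f t \<in> V t" if "f \<in> ?V" "t < n" for f t
    using that unfolding strong_prod_vert_def by auto
  have Q': "R t (f t) (h t) \<or> R t (g t) (w t)"
    if "t < n" "f \<in> ?V" "g \<in> ?V" "h \<in> ?V" "w \<in> ?V" "?E f g" "?E g h" "?E h w" for t f g h w
    using Q[OF \<open>t<n\<close> memV[OF that(2,1)] memV[OF that(3,1)] memV[OF that(4,1)] memV[OF that(5,1)]]
      sp_adj_R[OF that(6,1)] sp_adj_R[OF that(7,1)] sp_adj_R[OF that(8,1)]
    unfolding R_def by blast
  have NA: "\<not> R 0 (f 0) (g 0) \<or> \<not> R 1 (f 1) (g 1)"
    if "f \<in> ?V" "g \<in> ?V" "\<not> ?E f g" "f \<noteq> g" for f g
    using sp_nonadj[OF that(3,4)] total memV[OF that(1)] memV[OF that(2)] unfolding R_def by blast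
  have n0: "0 < n" and n1: "1 < n" using n2 by auto
  show ?thesis unfolding berge_def
  proof (intro allI impI conjI)
    fix k :: nat assume k: "odd k \<and> 5 \<le> k"
    define s where "s i = (i + 1) mod k" for i
    have s_lt: "s i < k" for i using k unfolding s_def by auto
    have s_eq: "i < k \<Longrightarrow> s i = (if i + 1 = k then 0 else i + 1)" for i
      unfolding s_def by (rule succ_mod)
    show "\<not> has_induced_cycle ?V ?E k"
    proof
      assume "has_induced_cycle ?V ?E k"
      then obtain c where inj: "inj_on c {..<k}" and cV: "c ` {..<k} \<subseteq> ?V"
        and adj: "\<forall>i<k. \<forall>j<k. ?E (c i) (c j) \<longleftrightarrow> (j = s i \<or> i = s j)"
        unfolding has_induced_cycle_def s_def by blast
      have cin: "c i \<in> ?V" if "i < k" for i using cV that by auto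
      define A where "A i = R 0 (c i 0) (c (s (s i)) 0)" for i
      define B where "B i = R 1 (c i 1) (c (s (s i)) 1)" for i
      have nonadj2: "\<not> ?E (c i) (c (s (s i)))" "c i \<noteq> c (s (s i))" if "i < k" for i
      proof -
        have "s (s i) \<noteq> s i \<and> i \<noteq> s (s (s i)) \<and> i \<noteq> s (s i)"
          using that k s_lt[of i] s_lt[of "s i"] s_eq[of i] s_eq[of "s i"] s_eq[of "s (s i)"]
          by (auto split: if_splits)
        then show "\<not> ?E (c i) (c (s (s i)))" "c i \<noteq> c (s (s i))"
          using adj that s_lt inj unfolding inj_on_def by (metis lessThan_iff)+
      qed
      have AB: "\<not> (A i \<and> B i)" if "i < k" for i
        using NA[OF cin[OF that] cin[OF s_lt] nonadj2[OF that]] unfolding A_def B_def by blast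
      have adjs: "?E (c i) (c (s i))" if "i < k" for i
        using adj that s_lt by blast
      have AA: "A i \<or> A (s i)" and BB: "B i \<or> B (s i)" if "i < k" for i
        using Q'[OF n0 cin[OF that] cin[OF s_lt] cin[OF s_lt] cin[OF s_lt]
            adjs[OF that] adjs[OF s_lt] adjs[OF s_lt]]
          Q'[OF n1 cin[OF that] cin[OF s_lt] cin[OF s_lt] cin[OF s_lt]
            adjs[OF that] adjs[OF s_lt] adjs[OF s_lt]]
        unfolding A_def B_def by blast+
      have alt: "A (s i) \<longleftrightarrow> \<not> A i" if "i < k" for i
        using AA[OF that] BB[OF that] AB[OF that] AB[OF s_lt[of i]] by blast
      have ind: "i < k \<Longrightarrow> (A i \<longleftrightarrow> (A 0 \<longleftrightarrow> even i))" for i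
      proof (induction i)
        case 0 then show ?case by simp
      next
        case (Suc i)
        then have "s i = Suc i" using s_eq[of i] by auto
        then show ?case using Suc alt[of i] by auto
      qed
      have "s (k - 1) = 0" using s_eq[of "k-1"] k by auto
      then have "A 0 \<longleftrightarrow> \<not> A (k - 1)" using alt[of "k-1"] k by auto
      moreover have "A (k - 1) \<longleftrightarrow> A 0" using ind[of "k-1"] k by auto
      ultimately show False by blast
    qed
    show "\<not> has_induced_cycle ?V (compl_adj ?E) k"
    proof
      assume "has_induced_cycle ?V (compl_adj ?E) k"
      then obtain c where inj: "inj_on c {..<k}" and cV: "c ` {..<k} \<subseteq> ?V"
        and adj: "\<forall>i<k. \<forall>j<k. compl_adj ?E (c i) (c j) \<longleftrightarrow> (j = s i \<or> i = s j)"
        unfolding has_induced_cycle_def s_def by blast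
      have cin: "c i \<in> ?V" if "i < k" for i using cV that by auto
      have far: "?E (c i) (c j)" if "i < k" "j < k" "i \<noteq> j" "j \<noteq> s i" "i \<noteq> s j" for i j
      proof -
        have "c i \<noteq> c j" using inj that unfolding inj_on_def by auto
        then show ?thesis using adj that unfolding compl_adj_def by blast
      qed
      define A where "A i = R 0 (c i 0) (c (s i) 0)" for i
      define B where "B i = R 1 (c i 1) (c (s i) 1)" for i
      have AB: "\<not> (A i \<and> B i)" if "i < k" for i
      proof -
        have "compl_adj ?E (c i) (c (s i))" using adj that s_lt by blast
        then have "\<not> ?E (c i) (c (s i))" "c i \<noteq> c (s i)" unfolding compl_adj_def by auto
        then show ?thesis using NA[OF cin[OF that] cin[OF s_lt]] unfolding A_def B_def by blast
      qed
      have pair: "(A u \<or> A v) \<and> (B u \<or> B v)"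
        if "u < k" "v < k" "?E (c u) (c v)" "?E (c v) (c (s u))" "?E (c (s u)) (c (s v))" for u v
        using Q'[OF n0 cin[OF that(1)] cin[OF that(2)] cin[OF s_lt] cin[OF s_lt] that(3-5)]
          Q'[OF n1 cin[OF that(1)] cin[OF that(2)] cin[OF s_lt] cin[OF s_lt] that(3-5)]
        unfolding A_def B_def by blast
      have s0: "s 0 = 1" "s 1 = 2" "s (Suc 0) = 2" "s 2 = 3" "s 3 = 4" using s_eq k by auto
      have s4: "s 4 = (if k = 5 then 0 else 5)" using s_eq[of 4] k by auto
      have s5: "k \<noteq> 5 \<longrightarrow> s 5 = 6"
      proof
        assume "k \<noteq> 5" then have "7 \<le> k" using k by presburger
        then show "s 5 = 6" using s_eq[of 5] by auto
      qed
      have p20: "(A 2 \<or> A 0) \<and> (B 2 \<or> B 0)"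
        by (rule pair; (rule far)?; (use k in \<open>simp add: s0 s4 s5\<close>))
      have p31: "(A 3 \<or> A 1) \<and> (B 3 \<or> B 1)"
        by (rule pair; (rule far)?; (use k in \<open>simp add: s0 s4 s5\<close>))
      have p42: "(A 4 \<or> A 2) \<and> (B 4 \<or> B 2)"
        by (rule pair; (rule far)?; (use k in \<open>simp add: s0 s4 s5\<close>))
      have p03: "(A 0 \<or> A 3) \<and> (B 0 \<or> B 3)"
        by (rule pair; (rule far)?; (use k in \<open>simp add: s0 s4 s5\<close>))
      have p14: "(A 1 \<or> A 4) \<and> (B 1 \<or> B 4)"
        by (rule pair; (rule far)?; (use k in \<open>simp add: s0 s4 s5\<close>))
      have "0 < k" "1 < k" "2 < k" "3 < k" "4 < k" using k by auto
      then have "\<not> (A 0 \<and> B 0)" "\<not> (A 1 \<and> B 1)" "\<not> (A 2 \<and> B 2)" "\<not> (A 3 \<and> B 3)" "\<not> (A 4 \<and> B 4)"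
        using AB by blast+
      then show False using p20 p31 p42 p03 p14 by blast
    qed
  qed
qed



context group begin

lemma pow_in_gen_nat:
  assumes fin: "finite (carrier G)" and g: "g \<in> carrier G"
    and dv: "ord (g [^] (m::nat)) dvd ord (g [^] (j::nat))"
  shows "g [^] m \<in> generate G {g [^] j}"
proof (cases "j = 0")
  case True
  then have "ord (g [^] m) = 1" using dv by simp
  then have "g [^] m = \<one>" using ord_eq_1 g by blast
  then show ?thesis by (simp add: generate.one)
next
  case False
  define N where "N = ord g"
  have N0: "N > 0" using ord_ge_1[OF fin g] N_def by simp
  define d where "d = gcd N j"
  define e where "e = N div d"
  have d0: "d > 0" using N0 d_def by simp
  have Nde: "N = d * e" unfolding e_def d_def by simp
  have e0: "e > 0" using N0 Nde by (metis gr0I mult_0_right)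
  have ordj: "ord (g [^] j) = e" using ord_pow_gen[OF g, of j] False N_def d_def e_def by simp
  have "(g [^] m) [^] e = \<one>" using dv ordj g by (simp add: pow_eq_id)
  then have "g [^] (m * e) = \<one>" using g by (simp add: nat_pow_pow)
  then have "N dvd m * e" using g N_def by (simp add: pow_eq_id)
  then have "d * e dvd m * e" using Nde by simp
  then have "d dvd m" using e0 by simp
  then obtain q where q: "m = d * q" by blast
  obtain u v where uv: "j * u = N * v + gcd j N" using bezout_nat[OF False] by blast
  have gjN: "gcd j N = d" unfolding d_def by (simp add: gcd.commute)
  have "(g [^] j) [^] (u * q) = g [^] (j * u * q)" using g by (simp add: nat_pow_pow mult.assoc)
  also have "j * u * q = N * (v * q) + m" using uv gjN q by (simp add: algebra_simps)
  also have "g [^] (N * (v * q) + m) = g [^] m"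
    using g N_def by (simp add: nat_pow_mult[symmetric] nat_pow_pow[symmetric])
  finally have eq: "(g [^] j) [^] (u * q) = g [^] m" .
  have "(g [^] j) [^] (u * q) \<in> generate G {g [^] j}"
    using generate_pow_on_finite_carrier[OF fin] g by auto
  then show ?thesis using eq by simp
qed

lemma int_pow_to_nat:
  assumes fin: "finite (carrier G)" and g: "g \<in> carrier G"
  shows "\<exists>m'::nat. g [^] (m::int) = g [^] m'"
proof -
  have "g [^] m \<in> generate G {g}" using generate_pow[OF g] by auto
  then show ?thesis using generate_pow_on_finite_carrier[OF fin g] by auto
qed

lemma pow_in_gen_int:
  assumes fin: "finite (carrier G)" and g: "g \<in> carrier G"
    and dv: "ord (g [^] (m::int)) dvd ord (g [^] (j::int))"
  shows "g [^] m \<in> generate G {g [^] j}"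
proof -
  obtain m' :: nat where m': "g [^] m = g [^] m'" using int_pow_to_nat[OF fin g] by blast
  obtain j' :: nat where j': "g [^] j = g [^] j'" using int_pow_to_nat[OF fin g] by blast
  show ?thesis using pow_in_gen_nat[OF fin g, of m' j'] dv m' j' by simp
qed

lemma gen_trans:
  assumes "a \<in> generate G {b}" "b \<in> generate G {c}" "c \<in> carrier G"
  shows "a \<in> generate G {c}"
proof -
  have "generate G {b} \<subseteq> generate G {c}"
    by (rule generate_subgroup_incl) (use assms(2) generate_is_subgroup[of "{c}"] assms(3) in auto)
  then show ?thesis using assms(1) by blast
qed

lemma ppow_dvd_cases:
  assumes "ord x = p ^ a" "ord y = p ^ b"
  shows "ord x dvd ord y \<or> ord y dvd ord x"
  using assms by (metis le_imp_power_dvd nat_le_linear)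

lemma gen_tree:
  assumes fin: "finite (carrier G)" and c: "c \<in> carrier G"
    and a: "a \<in> generate G {c}" and b: "b \<in> generate G {c}"
    and oa: "ord a = p ^ i" and ob: "ord b = p ^ j"
  shows "a \<in> generate G {b} \<or> b \<in> generate G {a}"
proof -
  obtain m :: int where m: "a = c [^] m" using a generate_pow[OF c] by auto
  obtain l :: int where l: "b = c [^] l" using b generate_pow[OF c] by auto
  show ?thesis using ppow_dvd_cases[OF oa ob] pow_in_gen_int[OF fin c] m l by metis
qed

lemma adj_iff_gen:
  assumes fin: "finite (carrier G)" and x: "x \<in> carrier G" and y: "y \<in> carrier G"
    and ox: "ord x = p ^ i" and oy: "ord y = p ^ j"
  shows "(x = y \<or> enh_adj G x y) \<longleftrightarrow> (x \<in> generate G {y} \<or> y \<in> generate G {x})"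
proof
  assume "x = y \<or> enh_adj G x y"
  then show "x \<in> generate G {y} \<or> y \<in> generate G {x}"
  proof
    assume "x = y" then show ?thesis by (simp add: generate.incl)
  next
    assume "enh_adj G x y"
    then have cyc: "cyclic_group (subgroup_generated G {x, y})" unfolding enh_adj_def by blast
    let ?H = "subgroup_generated G {x, y}"
    have grH: "group ?H" by simp
    have cH: "carrier ?H = generate G {x, y}"
      using x y by (simp add: carrier_subgroup_generated Int_absorb1)
    obtain g where g: "g \<in> carrier ?H" and rg: "carrier ?H = range (\<lambda>n::int. g [^]\<^bsub>?H\<^esub> n)"
      using group.cyclic_group[OF grH] cyc by blast
    have gG: "g \<in> carrier G" using g cH generate_incl[of "{x,y}"] x y by auto
    have xH: "x \<in> carrier ?H" and yH: "y \<in> carrier ?H" using cH by (auto intro: generate.incl)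
    obtain m :: int where m: "x = g [^]\<^bsub>?H\<^esub> m" using xH rg by auto
    obtain l :: int where l: "y = g [^]\<^bsub>?H\<^esub> l" using yH rg by auto
    have m': "x = g [^] m" using m int_pow_subgroup_generated[OF g] by simp
    have l': "y = g [^] l" using l int_pow_subgroup_generated[OF g] by simp
    show ?thesis using ppow_dvd_cases[OF ox oy] pow_in_gen_int[OF fin gG] m' l' by metis
  qed
next
  have key: "cyclic_group (subgroup_generated G {u, v})"
    if u: "u \<in> carrier G" and v: "v \<in> carrier G" and uv: "u \<in> generate G {v}" for u v
  proof -
    have "generate G {u, v} \<subseteq> generate G {v}"
      by (rule generate_subgroup_incl) (use uv generate_is_subgroup[of "{v}"] v generate.incl[of v "{v}"] in auto)
    moreover have "generate G {v} \<subseteq> generate G {u, v}" by (rule mono_generate) auto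
    ultimately have "generate G {u, v} = generate G {v}" by blast
    then have "subgroup_generated G {u, v} = subgroup_generated G {v}"
      using u v unfolding subgroup_generated_def by (simp add: Int_absorb1)
    then show ?thesis using cyclic_group_generated by simp
  qed
  assume "x \<in> generate G {y} \<or> y \<in> generate G {x}"
  then show "x = y \<or> enh_adj G x y"
    using key[OF x y] key[OF y x] unfolding enh_adj_def by (metis insert_commute)
qed


lemma cancel1: "g \<in> carrier G \<Longrightarrow> z \<in> carrier G \<Longrightarrow> inv g \<otimes> (g \<otimes> z) = z"
  by (simp add: m_assoc[symmetric])

lemma conj_hom:
  assumes g: "g \<in> carrier G"
  shows "group_hom G G (\<lambda>h. g \<otimes> h \<otimes> inv g)"
proof -
  have "(\<lambda>h. g \<otimes> h \<otimes> inv g) \<in> hom G G"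
  proof (rule homI)
    fix x y assume x: "x \<in> carrier G" and y: "y \<in> carrier G"
    show "g \<otimes> x \<otimes> inv g \<in> carrier G" using g x by simp
    have "g \<otimes> x \<otimes> inv g \<otimes> (g \<otimes> y \<otimes> inv g) = g \<otimes> x \<otimes> (inv g \<otimes> g) \<otimes> y \<otimes> inv g"
      using g x y by (simp add: m_assoc cancel1)
    also have "\<dots> = g \<otimes> (x \<otimes> y) \<otimes> inv g" using g x y by (simp add: m_assoc cancel1)
    finally show "g \<otimes> (x \<otimes> y) \<otimes> inv g = g \<otimes> x \<otimes> inv g \<otimes> (g \<otimes> y \<otimes> inv g)" by simp
  qed
  then show ?thesis by (simp add: group_hom_def group_hom_axioms_def is_group)
qed

lemma unique_sylow_normal:
  assumes "sylow_subgroups G p = {P}"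
  shows "P \<lhd> G"
proof -
  have P: "subgroup P G" "card P = p ^ multiplicity p (order G)"
    using assms unfolding sylow_subgroups_def by auto
  show ?thesis
  proof (rule normal_invI[OF P(1)])
    fix g h assume g: "g \<in> carrier G" and h: "h \<in> P"
    let ?f = "\<lambda>h. g \<otimes> h \<otimes> inv g"
    have sub: "subgroup (?f ` P) G"
      using group_hom.subgroup_img_is_subgroup[OF conj_hom[OF g] P(1)] by simp
    have "inj_on ?f P"
    proof (rule inj_onI)
      fix a b assume a: "a \<in> P" and b: "b \<in> P" and e: "?f a = ?f b"
      have aG: "a \<in> carrier G" and bG: "b \<in> carrier G" using a b P(1) subgroup.subset by blast+
      have "g \<otimes> a \<otimes> inv g \<otimes> g = g \<otimes> b \<otimes> inv g \<otimes> g" using e by simp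
      then have "g \<otimes> a = g \<otimes> b" using aG bG g by (simp add: m_assoc)
      then show "a = b" using aG bG g by simp
    qed
    then have "card (?f ` P) = card P" by (rule card_image)
    then have "?f ` P \<in> sylow_subgroups G p" using sub P unfolding sylow_subgroups_def by simp
    then have fP: "?f ` P = P" using assms by simp
    have "?f h \<in> ?f ` P" using h by (rule imageI)
    then show "g \<otimes> h \<otimes> inv g \<in> P" using fP by simp
  qed
qed

lemma p_elem_in_sylow:
  assumes fin: "finite (carrier G)" and p: "Factorial_Ring.prime (p::nat)"
    and syl: "sylow_subgroups G p = {P}" and x: "x \<in> carrier G" and ox: "ord x = p ^ k"
  shows "x \<in> P"
proof -
  have P: "subgroup P G" "card P = p ^ multiplicity p (order G)"
    using syl unfolding sylow_subgroups_def by auto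
  have nP: "P \<lhd> G" by (rule unique_sylow_normal[OF syl])
  interpret N: normal P G by (rule nP)
  have grM: "group (G Mod P)" by (rule N.factorgroup_is_group)
  let ?X = "P #> x"
  have X: "?X \<in> carrier (G Mod P)" using x unfolding carrier_FactGroup by auto
  have "?X [^]\<^bsub>G Mod P\<^esub> (p ^ k) = P #> (x [^] (p ^ k))" using N.FactGroup_pow[OF x] by simp
  also have "x [^] (p ^ k) = \<one>" using pow_ord_eq_1[OF x] ox by simp
  also have "P #> \<one> = P" using P(1) subgroup.subset coset_mult_one by blast
  finally have "?X [^]\<^bsub>G Mod P\<^esub> (p ^ k) = \<one>\<^bsub>G Mod P\<^esub>" by simp
  then have d1: "group.ord (G Mod P) ?X dvd p ^ k" using group.pow_eq_id[OF grM X] by simp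
  have d2: "group.ord (G Mod P) ?X dvd order (G Mod P)" using group.ord_dvd_group_order[OF grM X] .
  have lag: "order (G Mod P) * card P = order G"
    using lagrange[OF P(1)] by (simp add: FactGroup_def order_def)
  have oG: "order G \<noteq> 0" using fin order_gt_0_iff_finite by simp
  have nu: "\<not> is_unit p" using p prime_gt_1_nat by fastforce
  have np: "\<not> p dvd order (G Mod P)"
  proof
    assume "p dvd order (G Mod P)"
    then obtain r where r: "order (G Mod P) = p * r" by blast
    have "order G = (p * p ^ multiplicity p (order G)) * r" using lag P(2) r by (simp add: ac_simps)
    then have "p * p ^ multiplicity p (order G) dvd order G" by (metis dvd_triv_left)
    then have "p ^ Suc (multiplicity p (order G)) dvd order G" by simp
    then have "Suc (multiplicity p (order G)) \<le> multiplicity p (order G)"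
      using power_dvd_iff_le_multiplicity[OF oG nu] by blast
    then show False by simp
  qed
  obtain i where i: "i \<le> k" "group.ord (G Mod P) ?X = p ^ i" using d1 divides_primepow_nat[OF p] by blast
  have "i = 0"
  proof (rule ccontr)
    assume "i \<noteq> 0"
    then have "p dvd group.ord (G Mod P) ?X" using i(2) by simp
    then show False using d2 np dvd_trans by blast
  qed
  then have "group.ord (G Mod P) ?X = 1" using i by simp
  then have "?X = \<one>\<^bsub>G Mod P\<^esub>" using group.ord_eq_1[OF grM X] by simp
  then have "P #> x = P" by simp
  then show ?thesis using rcos_self[OF x P(1)] by simp
qed

end


lemma Qabs:
  assumes tr: "\<And>a b c. a \<in> S \<Longrightarrow> b \<in> S \<Longrightarrow> c \<in> S \<Longrightarrow> lr a b \<Longrightarrow> lr b c \<Longrightarrow> lr a c"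
    and tree: "\<And>a b c. a \<in> S \<Longrightarrow> b \<in> S \<Longrightarrow> c \<in> S \<Longrightarrow> lr a c \<Longrightarrow> lr b c \<Longrightarrow> lr a b \<or> lr b a"
    and S: "a \<in> S" "b \<in> S" "c \<in> S" "d \<in> S"
    and ab: "lr a b \<or> lr b a" and bc: "lr b c \<or> lr c b" and cd: "lr c d \<or> lr d c"
  shows "(lr a c \<or> lr c a) \<or> (lr b d \<or> lr d b)"
  using assms by metis


theorem mainTheorem3:
  fixes G :: "('a, 'b) monoid_scheme" and n :: nat and p :: "nat \<Rightarrow> nat"
  assumes "group G" and "finite (carrier G)"
    and "n \<ge> 2"
    and "inj_on p {..<n}"
    and "p ` {..<n} = {q. Factorial_Ring.prime q \<and> q dvd order G}"
    and "\<And>i. 2 \<le> i \<Longrightarrow> i < n \<Longrightarrow>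
           (\<exists>P. sylow_subgroups G (p i) = {P} \<and> cyclic_group (subgroup_generated G P))"
  shows "berge (strong_prod_vert n (\<lambda>i. p_elements G (p i)))
               (strong_prod_adj n (\<lambda>i. enh_adj G))"
proof (rule berge_abstract)
  interpret group G by (rule assms(1))
  have fin: "finite (carrier G)" by (rule assms(2))
  have pr: "Factorial_Ring.prime (p t)" if "t < n" for t using assms(5) that by blast
  have pe: "x \<in> carrier G \<and> (\<exists>k. ord x = p t ^ k)" if "x \<in> p_elements G (p t)" for x t
    using that unfolding p_elements_def by blast
  show "n \<ge> 2" by (rule assms(3))
  show "(a = c \<or> enh_adj G a c) \<or> (b = d \<or> enh_adj G b d)"
    if t: "t < n" and a: "a \<in> p_elements G (p t)" and b: "b \<in> p_elements G (p t)"
      and c: "c \<in> p_elements G (p t)" and d: "d \<in> p_elements G (p t)"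
      and ab: "a = b \<or> enh_adj G a b" and bc: "b = c \<or> enh_adj G b c" and cd: "c = d \<or> enh_adj G c d"
    for t a b c d
  proof -
    let ?S = "p_elements G (p t)"
    let ?lr = "\<lambda>x y. x \<in> generate G {y}"
    have R: "(x = y \<or> enh_adj G x y) \<longleftrightarrow> (?lr x y \<or> ?lr y x)" if "x \<in> ?S" "y \<in> ?S" for x y
      using pe[OF that(1)] pe[OF that(2)] adj_iff_gen[OF fin] by blast
    have tr: "?lr x z" if "x \<in> ?S" "y \<in> ?S" "z \<in> ?S" "?lr x y" "?lr y z" for x y z
      using gen_trans that pe by blast
    have tree: "?lr x y \<or> ?lr y x" if "x \<in> ?S" "y \<in> ?S" "z \<in> ?S" "?lr x z" "?lr y z" for x y z
      using gen_tree[OF fin] that pe by metis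
    have "(?lr a c \<or> ?lr c a) \<or> (?lr b d \<or> ?lr d b)"
      by (rule Qabs[where S = ?S and lr = ?lr, OF tr tree a b c d])
        (use R[OF a b] R[OF b c] R[OF c d] ab bc cd in auto)
    then show ?thesis using R[OF a c] R[OF b d] by blast
  qed
  show "a = b \<or> enh_adj G a b"
    if t2: "2 \<le> t" and t: "t < n" and a: "a \<in> p_elements G (p t)" and b: "b \<in> p_elements G (p t)"
    for t a b
  proof -
    obtain P where syl: "sylow_subgroups G (p t) = {P}" and cyc: "cyclic_group (subgroup_generated G P)"
      using assms(6)[OF t2 t] by blast
    have aG: "a \<in> carrier G" and bG: "b \<in> carrier G" using pe a b by auto
    obtain i where oa: "ord a = p t ^ i" using pe a by blast
    obtain j where ob: "ord b = p t ^ j" using pe b by blast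
    have aP: "a \<in> P" by (rule p_elem_in_sylow[OF fin pr[OF t] syl aG oa])
    have bP: "b \<in> P" by (rule p_elem_in_sylow[OF fin pr[OF t] syl bG ob])
    have sP: "subgroup P G" using syl unfolding sylow_subgroups_def by auto
    let ?H = "subgroup_generated G P"
    have cH: "carrier ?H = P" using subgroup.carrier_subgroup_generated_subgroup[OF sP] .
    obtain g where g: "g \<in> carrier ?H" and rg: "carrier ?H = range (\<lambda>n::int. g [^]\<^bsub>?H\<^esub> n)"
      using group.cyclic_group[OF group_subgroup_generated] cyc by blast
    have gG: "g \<in> carrier G" using g cH sP subgroup.subset by blast
    obtain m :: int where m: "a = g [^]\<^bsub>?H\<^esub> m" using aP cH rg by auto
    obtain l :: int where l: "b = g [^]\<^bsub>?H\<^esub> l" using bP cH rg by auto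
    have m': "a = g [^]\<^bsub>G\<^esub> m" using m int_pow_subgroup_generated[OF g] by simp
    have l': "b = g [^]\<^bsub>G\<^esub> l" using l int_pow_subgroup_generated[OF g] by simp
    have "a \<in> generate G {b} \<or> b \<in> generate G {a}"
      using ppow_dvd_cases[OF oa ob] pow_in_gen_int[OF fin gG] m' l' by metis
    then show ?thesis using adj_iff_gen[OF fin aG bG oa ob] by blast
  qed
qed

end
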